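(* Let $\epsilon\in(0,1)$. Suppose $W=(W_1,\dots,W_n)\in\{0,1\}^n$ satisfies the $\epsilon$-martingale condition, and let $B=(B_1,\dots,B_n)\in\{0,1\}^n$ have independent coordinates with $\Pr[B_i=1]=(1-\epsilon)/2$. Let $R_\infty$ be a random variable on $\{0,1,2,\dots\}$ with \[ \Pr[R_\infty=k]=\frac{2\epsilon}{1+\epsilon}\left(\frac{1-\epsilon}{1+\epsilon}\right)^k,\qquad k=0,1,2,\dots. \] Then $\rho(W)\preceq\rho(B)\preceq R_\infty$, i.e., $\rho(B)$ stochastically dominates $\rho(W)$ and $R_\infty$ stochastically dominates $\rho(B)$.
   Context: Characteristic strings and forks. For $w=w_1\dots w_n\in\{0,1\}^n$ (index $i$ honest if $w_i=0$, adversarial if $w_i=1$), a fork for $w$ is a rooted tree with edges directed away from the root $r$ and labeling $\ell:V\to\{0,\dots,n\}$ with (F1) $\ell(r)=0$; (F2) labels strictly increasing along directed paths; (F3) each honest index labels exactly one vertex; (F4) for honest $i<j$ the vertex labeled $i$ has strictly smaller depth than the vertex labeled $j$. A vertex is honest if it is the root or labeled by an honest index. A tine is a directed path from the root; its length is its number of edges, $\ell(t)$ the label of its last vertex. A fork is closed if every leaf is honest; a closed fork has a unique longest tine $\hat t$. For closed $F$ and tine $t$: $\mathrm{gap}(t)=\mathrm{length}(\hat t)-\mathrm{length}(t)$, $\mathrm{reserve}(t)=|\{i:w_i=1,\ i>\ell(t)\}|$, $\mathrm{reach}(t)=\mathrm{reserve}(t)-\mathrm{gap}(t)$; $\rho(F)=\max_t\mathrm{reach}(t)$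 and $\rho(w)=\max\{\rho(F):F \text{ a closed fork for } w\}$. A random variable $W\in\{0,1\}^n$ satisfies the $\epsilon$-martingale condition if for every $t$, $\Pr[W_t=1\mid W_1,\dots,W_{t-1}]\le(1-\epsilon)/2$ for arbitrary conditioning values. For real random variables, $Y\preceq X$ ($X$ stochastically dominates $Y$) means $\Pr[X\ge\Lambda]\ge\Pr[Y\ge\Lambda]$ for every $\Lambda\in\mathbb{R}$. *)

theory Defs
  imports "HOL-Probability.Probability" "HOL-Library.Sublist"
begin

text \<open>Characteristic strings are bool lists: entry i (1-based) is w ! (i-1);
  True = 1 = adversarial, False = 0 = honest.\<close>

definition honest_idx :: "bool list \<Rightarrow> nat \<Rightarrow> bool" where
  "honest_idx w i \<longleftrightarrow> 1 \<le> i \<and> i \<le> length w \<and> \<not> w ! (i - 1)"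

text \<open>A fork is a finite rooted tree whose vertices are tree addresses (nat lists),
  the root being the empty list and the parent of a vertex being its butlast;
  l is the labelling. Depth of vertex v = length v; the tine ending in v is the
  path from the root to v.\<close>

definition is_fork :: "bool list \<Rightarrow> nat list set \<Rightarrow> (nat list \<Rightarrow> nat) \<Rightarrow> bool" where
  "is_fork w V l \<longleftrightarrow>
     finite V \<and> [] \<in> V \<and> (\<forall>v\<in>V. \<forall>u. prefix u v \<longrightarrow> u \<in> V) \<and>
     (\<forall>v\<in>V. l v \<le> length w) \<and>
     l [] = 0 \<and>
     (\<forall>u\<in>V. \<forall>v\<in>V. strict_prefix u v \<longrightarrow> l u < l v) \<and>
     (\<forall>i. honest_idx w i \<longrightarrow> card {v\<in>V. l v = i} = 1) \<and>
     (\<forall>u\<in>V. \<forall>v\<in>V. honest_idx w (l u) \<and> honest_idx w (l v) \<and> l u < l v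
        \<longrightarrow> length u < length v)"

definition honest_vertex :: "bool list \<Rightarrow> (nat list \<Rightarrow> nat) \<Rightarrow> nat list \<Rightarrow> bool" where
  "honest_vertex w l v \<longleftrightarrow> v = [] \<or> honest_idx w (l v)"

definition is_leaf :: "nat list set \<Rightarrow> nat list \<Rightarrow> bool" where
  "is_leaf V v \<longleftrightarrow> v \<in> V \<and> \<not> (\<exists>u\<in>V. strict_prefix v u)"

definition closed_fork :: "bool list \<Rightarrow> nat list set \<Rightarrow> (nat list \<Rightarrow> nat) \<Rightarrow> bool" where
  "closed_fork w V l \<longleftrightarrow> is_fork w V l \<and> (\<forall>v. is_leaf V v \<longrightarrow> honest_vertex w l v)"

definition fork_height :: "nat list set \<Rightarrow> nat" where
  "fork_height V = Max (length ` V)"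

definition gap :: "nat list set \<Rightarrow> nat list \<Rightarrow> nat" where
  "gap V v = fork_height V - length v"

definition reserve :: "bool list \<Rightarrow> (nat list \<Rightarrow> nat) \<Rightarrow> nat list \<Rightarrow> nat" where
  "reserve w l v = card {i. 1 \<le> i \<and> i \<le> length w \<and> w ! (i - 1) \<and> i > l v}"

definition reach :: "bool list \<Rightarrow> nat list set \<Rightarrow> (nat list \<Rightarrow> nat) \<Rightarrow> nat list \<Rightarrow> int" where
  "reach w V l v = int (reserve w l v) - int (gap V v)"

definition rho_fork :: "bool list \<Rightarrow> nat list set \<Rightarrow> (nat list \<Rightarrow> nat) \<Rightarrow> int" where
  "rho_fork w V l = Max (reach w V l ` V)"

definition rho :: "bool list \<Rightarrow> int" where
  "rho w = Max {rho_fork w V l | V l. closed_fork w V l}"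

text \<open>Epsilon-martingale condition for a distribution on length-n strings
  (0-based position t, i.e. coordinate W_(t+1)); conditioning written multiplicatively.\<close>
definition eps_martingale :: "real \<Rightarrow> nat \<Rightarrow> bool list pmf \<Rightarrow> bool" where
  "eps_martingale \<epsilon> n W \<longleftrightarrow>
     (\<forall>t < n. \<forall>p. length p = t \<longrightarrow>
        measure_pmf.prob W {w. take t w = p \<and> w ! t}
          \<le> (1 - \<epsilon>) / 2 * measure_pmf.prob W {w. take t w = p})"

fun bernoulli_list :: "nat \<Rightarrow> real \<Rightarrow> bool list pmf" where
  "bernoulli_list 0 q = return_pmf []"
| "bernoulli_list (Suc n) q =
     bind_pmf (bernoulli_pmf q) (\<lambda>b. map_pmf (\<lambda>bs. b # bs) (bernoulli_list n q))"

end

theory Submission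
  imports Defs
begin


fun wk :: "nat \<Rightarrow> bool list \<Rightarrow> nat" where
  "wk s [] = s"
| "wk s (b # bs) = wk (if b then Suc s else s - 1) bs"

lemma wk_snoc: "wk s (w @ [b]) = (if b then Suc (wk s w) else wk s w - 1)"
  by (induction w arbitrary: s) auto

lemma wk_mono: "s \<le> s' \<Longrightarrow> wk s w \<le> wk s' w"
  by (induction w arbitrary: s s') auto

lemma reserve_le: "reserve w l v \<le> length w"
proof -
  have "{i. 1 \<le> i \<and> i \<le> length w \<and> w ! (i - 1) \<and> i > l v} \<subseteq> {1..length w}" by auto
  then have "reserve w l v \<le> card {1..length w}" unfolding reserve_def by (intro card_mono) auto
  then show ?thesis by simp
qed

lemma fork_basic:
  assumes "is_fork w V l"
  shows "finite V" "[] \<in> V" "V \<noteq> {}"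
  using assms unfolding is_fork_def by auto

lemma height_ge: "is_fork w V l \<Longrightarrow> v \<in> V \<Longrightarrow> length v \<le> fork_height V"
  unfolding fork_height_def using fork_basic by (intro Max_ge) auto

lemma height_attained: "is_fork w V l \<Longrightarrow> \<exists>d\<in>V. length d = fork_height V"
proof -
  assume f: "is_fork w V l"
  have "fork_height V \<in> length ` V" unfolding fork_height_def
    using fork_basic[OF f] by (intro Max_in) auto
  then show ?thesis by auto
qed

lemma rho_fork_ge_reach: "is_fork w V l \<Longrightarrow> v \<in> V \<Longrightarrow> reach w V l v \<le> rho_fork w V l"
  unfolding rho_fork_def using fork_basic by (intro Max_ge) auto

lemma rho_fork_bounds:
  assumes f: "is_fork w V l"
  shows "0 \<le> rho_fork w V l" "rho_fork w V l \<le> int (length w)"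
proof -
  obtain d where d: "d \<in> V" "length d = fork_height V" using height_attained[OF f] by blast
  have "reach w V l d \<ge> 0" using d unfolding reach_def gap_def by simp
  then show "0 \<le> rho_fork w V l" using rho_fork_ge_reach[OF f d(1)] by linarith
  have "\<forall>v\<in>V. reach w V l v \<le> int (length w)"
    using reserve_le unfolding reach_def by (smt (verit) of_nat_0_le_iff of_nat_mono)
  then show "rho_fork w V l \<le> int (length w)" unfolding rho_fork_def
    using fork_basic[OF f] by simp
qed

lemma rho_facts:
  assumes ex: "closed_fork w V0 l0"
  shows "closed_fork w V l \<Longrightarrow> rho_fork w V l \<le> rho w"
    and "\<exists>V l. closed_fork w V l \<and> rho_fork w V l = rho w"
proof -
  let ?S = "{rho_fork w V l |V l. closed_fork w V l}"
  have sub: "?S \<subseteq> {0..int (length w)}"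
    using rho_fork_bounds unfolding closed_fork_def by fastforce
  have fin: "finite ?S" by (rule finite_subset[OF sub]) simp
  have ne: "?S \<noteq> {}" using ex by blast
  show "closed_fork w V l \<Longrightarrow> rho_fork w V l \<le> rho w"
    unfolding rho_def using fin by (intro Max_ge) auto
  have "rho w \<in> ?S" unfolding rho_def using fin ne by (rule Max_in)
  then obtain V1 l1 where "rho w = rho_fork w V1 l1" "closed_fork w V1 l1" by blast
  then show "\<exists>V l. closed_fork w V l \<and> rho_fork w V l = rho w" by metis
qed

lemma reach_parent:
  assumes f: "is_fork w V l" and v: "v \<in> V" "v \<noteq> []" and nh: "\<not> honest_vertex w l v"
  shows "reach w V l v \<le> reach w V l (butlast v)"
proof -
  let ?p = "butlast v"
  have sp: "strict_prefix ?p v" using v(2)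
    by (metis append_butlast_last_id prefixeq_butlast prefix_order.dual_order.not_eq_order_implies_strict self_append_conv snoc_eq_iff_butlast)
  have pV: "?p \<in> V" using f v(1) prefixeq_butlast unfolding is_fork_def by blast
  have lt: "l ?p < l v" using f sp pV v(1) unfolding is_fork_def by blast
  have le: "l v \<le> length w" using f v(1) unfolding is_fork_def by blast
  have adv: "w ! (l v - 1)" using nh lt le v(2) unfolding honest_vertex_def honest_idx_def by auto
  let ?Sv = "{i. 1 \<le> i \<and> i \<le> length w \<and> w ! (i - 1) \<and> i > l v}"
  let ?Sp = "{i. 1 \<le> i \<and> i \<le> length w \<and> w ! (i - 1) \<and> i > l ?p}"
  have "insert (l v) ?Sv \<subseteq> ?Sp" using lt le adv by auto
  moreover have "finite ?Sp" by (rule finite_subset[of _ "{1..length w}"]) auto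
  ultimately have "card (insert (l v) ?Sv) \<le> card ?Sp" by (rule card_mono[rotated])
  moreover have "finite ?Sv" by (rule finite_subset[of _ "{1..length w}"]) auto
  ultimately have res: "reserve w l v + 1 \<le> reserve w l ?p" unfolding reserve_def by simp
  have hv: "length v \<le> fork_height V" using height_ge[OF f v(1)] .
  have "length ?p = length v - 1" by simp
  then have "int (gap V ?p) = int (gap V v) + 1" unfolding gap_def using hv v(2)
    by (cases v) auto
  then show ?thesis unfolding reach_def using res by linarith
qed



lemma honest_snoc: "honest_idx (w @ [b]) i \<longleftrightarrow> honest_idx w i \<or> (i = Suc (length w) \<and> \<not> b)"
  unfolding honest_idx_def by (auto simp: nth_append)

lemma reserve_snoc_F: "reserve (w @ [False]) l v = reserve w l v"
proof -
  have "{i. 1 \<le> i \<and> i \<le> length (w @ [False]) \<and> (w @ [False]) ! (i - 1) \<and> i > l v}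
      = {i. 1 \<le> i \<and> i \<le> length w \<and> w ! (i - 1) \<and> i > l v}"
    by (auto simp: nth_append le_Suc_eq)
  then show ?thesis unfolding reserve_def by simp
qed

lemma reserve_snoc_T: "l v \<le> length w \<Longrightarrow> reserve (w @ [True]) l v = reserve w l v + 1"
proof -
  assume a: "l v \<le> length w"
  have "{i. 1 \<le> i \<and> i \<le> length (w @ [True]) \<and> (w @ [True]) ! (i - 1) \<and> i > l v}
      = insert (Suc (length w)) {i. 1 \<le> i \<and> i \<le> length w \<and> w ! (i - 1) \<and> i > l v}"
    using a by (auto simp: nth_append le_Suc_eq)
  moreover have "finite {i. 1 \<le> i \<and> i \<le> length w \<and> w ! (i - 1) \<and> i > l v}"
    by (rule finite_subset[of _ "{1..length w}"]) auto
  ultimately show ?thesis unfolding reserve_def by simp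
qed

lemma honest_vertex_T: "honest_vertex (w @ [True]) l v = honest_vertex w l v"
  unfolding honest_vertex_def by (simp add: honest_snoc)

lemma fork_T_to: "is_fork w V l \<Longrightarrow> is_fork (w @ [True]) V l"
  unfolding is_fork_def by (auto simp: honest_snoc)

lemma fork_T_from:
  assumes c: "closed_fork (w @ [True]) V l"
  shows "closed_fork w V l"
proof -
  have f: "is_fork (w @ [True]) V l" using c unfolding closed_fork_def by simp
  have lab: "l v \<le> length w" if v: "v \<in> V" for v
  proof (rule ccontr)
    assume "\<not> l v \<le> length w"
    then have e: "l v = Suc (length w)" using f v unfolding is_fork_def by fastforce
    have "is_leaf V v"
    proof -
      have "\<not> (\<exists>u\<in>V. strict_prefix v u)"
      proof
        assume "\<exists>u\<in>V. strict_prefix v u"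
        then obtain u where "u \<in> V" "strict_prefix v u" by blast
        then have "l v < l u" "l u \<le> Suc (length w)" using f v unfolding is_fork_def by auto
        then show False using e by simp
      qed
      then show ?thesis using v unfolding is_leaf_def by simp
    qed
    then have "honest_vertex (w @ [True]) l v" using c unfolding closed_fork_def by blast
    moreover have "l [] = 0" using f unfolding is_fork_def by simp
    ultimately show False using e unfolding honest_vertex_def by (auto simp: honest_snoc honest_idx_def)
  qed
  have "is_fork w V l" using f lab unfolding is_fork_def by (auto simp: honest_snoc)
  then show ?thesis using c unfolding closed_fork_def by (simp add: honest_vertex_T)
qed

lemma rho_fork_T:
  assumes f: "is_fork w V l"
  shows "rho_fork (w @ [True]) V l = rho_fork w V l + 1"
proof -
  have "\<And>v. v \<in> V \<Longrightarrow> reach (w @ [True]) V l v = reach w V l v + 1"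
    using f unfolding reach_def is_fork_def by (auto simp: reserve_snoc_T)
  then have "reach (w @ [True]) V l ` V = (\<lambda>v. reach w V l v + 1) ` V" by simp
  then show ?thesis unfolding rho_fork_def using fork_basic[OF f]
    by (simp add: Max_add_commute)
qed

lemma closed_T_to: "closed_fork w V l \<Longrightarrow> closed_fork (w @ [True]) V l"
  unfolding closed_fork_def by (simp add: fork_T_to honest_vertex_T)



lemma F_lower:
  assumes c: "closed_fork w V l"
  shows "\<exists>V' l'. closed_fork (w @ [False]) V' l' \<and> max (rho_fork w V l - 1) 0 \<le> rho_fork (w @ [False]) V' l'"
proof -
  have f: "is_fork w V l" using c unfolding closed_fork_def by simp
  obtain d where d: "d \<in> V" "length d = fork_height V" using height_attained[OF f] by blast
  define x where "x = d @ [0]"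
  define V' where "V' = insert x V"
  define l' where "l' = l(x := Suc (length w))"
  have hV: "\<And>v. v \<in> V \<Longrightarrow> length v \<le> length d" using height_ge[OF f] d by simp
  have xV: "x \<notin> V" using hV unfolding x_def by fastforce
  have l'V: "\<And>v. v \<in> V \<Longrightarrow> l' v = l v" unfolding l'_def using xV by auto
  have l'x: "l' x = Suc (length w)" unfolding l'_def by simp
  have lab: "\<And>v. v \<in> V \<Longrightarrow> l v \<le> length w" using f unfolding is_fork_def by blast
  have pc: "\<And>v u. v \<in> V \<Longrightarrow> prefix u v \<Longrightarrow> u \<in> V" using f unfolding is_fork_def by blast
  have inc: "\<And>u v. u \<in> V \<Longrightarrow> v \<in> V \<Longrightarrow> strict_prefix u v \<Longrightarrow> l u < l v"
    using f unfolding is_fork_def by blast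
  have hon: "\<And>i. honest_idx w i \<Longrightarrow> card {v\<in>V. l v = i} = 1" using f unfolding is_fork_def by blast
  have f4: "\<And>u v. u \<in> V \<Longrightarrow> v \<in> V \<Longrightarrow> honest_idx w (l u) \<Longrightarrow> honest_idx w (l v) \<Longrightarrow> l u < l v
      \<Longrightarrow> length u < length v" using f unfolding is_fork_def by blast
  have l0: "l [] = 0" using f unfolding is_fork_def by blast
  have prefx: "\<And>u. prefix u x \<Longrightarrow> u = x \<or> prefix u d" unfolding x_def by simp
  have lenx: "length x = Suc (length d)" unfolding x_def by simp
  have fork': "is_fork (w @ [False]) V' l'"
    unfolding is_fork_def
  proof (intro conjI ballI allI impI)
    show "finite V'" unfolding V'_def using fork_basic[OF f] by simp
    show "[] \<in> V'" unfolding V'_def using fork_basic[OF f] by simp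
  next
    fix v u assume "v \<in> V'" "prefix u v"
    then show "u \<in> V'" unfolding V'_def using pc prefx d(1) by blast
  next
    fix v assume "v \<in> V'" then show "l' v \<le> length (w @ [False])"
      unfolding V'_def using l'V l'x lab by fastforce
  next
    show "l' [] = 0" using l'V l0 fork_basic[OF f] by simp
  next
    fix u v assume uv: "u \<in> V'" "v \<in> V'" "strict_prefix u v"
    show "l' u < l' v"
    proof (cases "v = x")
      case True
      then have "u \<noteq> x" using uv(3) by auto
      have "prefix u x" using uv(3) True by (simp add: prefix_order.less_imp_le)
      then have "prefix u d" using prefx \<open>u \<noteq> x\<close> by blast
      then have "l u \<le> l d" using inc pc d(1) by (metis le_less prefix_order.le_imp_less_or_eq)
      then show ?thesis using True l'x l'V lab d(1) pc \<open>prefix u d\<close> \<open>u \<noteq> x\<close> uv(1)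
        unfolding V'_def by (metis insertE le_imp_less_Suc order_trans)
    next
      case False
      then have vV: "v \<in> V" using uv unfolding V'_def by auto
      have "u \<noteq> x" using vV hV uv(3) lenx prefix_length_less by fastforce
      then have "u \<in> V" using uv unfolding V'_def by auto
      then show ?thesis using inc vV uv(3) l'V by simp
    qed
  next
    fix i assume hi: "honest_idx (w @ [False]) i"
    show "card {v\<in>V'. l' v = i} = 1"
    proof (cases "i = Suc (length w)")
      case True
      have "{v\<in>V'. l' v = i} = {x}" unfolding V'_def using True l'x l'V lab by fastforce
      then show ?thesis by simp
    next
      case False
      then have hw: "honest_idx w i" using hi by (simp add: honest_snoc)
      have "{v\<in>V'. l' v = i} = {v\<in>V. l v = i}" unfolding V'_def using False l'x l'V by auto
      then show ?thesis using hon hw by simp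
    qed
  next
    fix u v assume uv: "u \<in> V'" "v \<in> V'"
      and h: "honest_idx (w @ [False]) (l' u) \<and> honest_idx (w @ [False]) (l' v) \<and> l' u < l' v"
    show "length u < length v"
    proof (cases "v = x")
      case True
      have "u \<noteq> x" using h True by auto
      then have "u \<in> V" using uv unfolding V'_def by auto
      then show ?thesis using True hV lenx by fastforce
    next
      case False
      then have vV: "v \<in> V" using uv unfolding V'_def by auto
      have "u \<noteq> x" using h l'x l'V vV lab by fastforce
      then have uV: "u \<in> V" using uv unfolding V'_def by auto
      have lu: "l u \<le> length w" "l v \<le> length w" using lab uV vV by auto
      have "honest_idx w (l u)" "honest_idx w (l v)"
        using h l'V uV vV lu by (auto simp: honest_snoc)
      then show ?thesis using f4 uV vV h l'V by simp
    qed
  qed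
  have closed': "closed_fork (w @ [False]) V' l'"
    unfolding closed_fork_def
  proof (intro conjI allI impI fork')
    fix v assume lv: "is_leaf V' v"
    show "honest_vertex (w @ [False]) l' v"
    proof (cases "v = x")
      case True
      then show ?thesis unfolding honest_vertex_def using l'x by (simp add: honest_snoc)
    next
      case False
      then have vV: "v \<in> V" using lv unfolding is_leaf_def V'_def by auto
      have "is_leaf V v" using lv vV unfolding is_leaf_def V'_def by auto
      then have "honest_vertex w l v" using c unfolding closed_fork_def by blast
      then show ?thesis unfolding honest_vertex_def using l'V vV by (auto simp: honest_snoc)
    qed
  qed
  have H': "fork_height V' = Suc (length d)"
    unfolding fork_height_def
  proof (rule Max_eqI)
    show "finite (length ` V')" unfolding V'_def using fork_basic[OF f] by simp
    show "\<And>y. y \<in> length ` V' \<Longrightarrow> y \<le> Suc (length d)" unfolding V'_def using hV lenx by fastforce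
    show "Suc (length d) \<in> length ` V'" unfolding V'_def using lenx by auto
  qed
  have reachV: "reach (w @ [False]) V' l' v = reach w V l v - 1" if v: "v \<in> V" for v
  proof -
    have "reserve (w @ [False]) l' v = reserve w l v"
      using reserve_snoc_F[of w l' v] l'V[OF v] unfolding reserve_def by simp
    moreover have "int (gap V' v) = int (gap V v) + 1"
      unfolding gap_def using H' d(2) hV[OF v] by simp
    ultimately show ?thesis unfolding reach_def by simp
  qed
  have "rho_fork w V l \<in> reach w V l ` V" unfolding rho_fork_def
    using fork_basic[OF f] by (intro Max_in) auto
  then obtain vs where vs: "vs \<in> V" "reach w V l vs = rho_fork w V l" by auto
  have "rho_fork w V l - 1 \<le> rho_fork (w @ [False]) V' l'"
    using rho_fork_ge_reach[OF fork', of vs] vs reachV unfolding V'_def by simp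
  moreover have "0 \<le> rho_fork (w @ [False]) V' l'" using rho_fork_bounds(1)[OF fork'] .
  ultimately show ?thesis using closed' by auto
qed



lemma F_upper:
  assumes c: "closed_fork (w @ [False]) V' l"
  shows "\<exists>V. closed_fork w V l \<and> rho_fork (w @ [False]) V' l \<le> max (rho_fork w V l - 1) 0"
proof -
  let ?w = "w @ [False]"
  define N where "N = length w"
  have f': "is_fork ?w V' l" using c unfolding closed_fork_def by simp
  have lab': "\<And>v. v \<in> V' \<Longrightarrow> l v \<le> Suc N" using f' unfolding is_fork_def N_def by auto
  have pc': "\<And>v u. v \<in> V' \<Longrightarrow> prefix u v \<Longrightarrow> u \<in> V'" using f' unfolding is_fork_def by blast
  have inc': "\<And>u v. u \<in> V' \<Longrightarrow> v \<in> V' \<Longrightarrow> strict_prefix u v \<Longrightarrow> l u < l v"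
    using f' unfolding is_fork_def by blast
  have hon': "\<And>i. honest_idx ?w i \<Longrightarrow> card {v\<in>V'. l v = i} = 1" using f' unfolding is_fork_def by blast
  have f4': "\<And>u v. u \<in> V' \<Longrightarrow> v \<in> V' \<Longrightarrow> honest_idx ?w (l u) \<Longrightarrow> honest_idx ?w (l v) \<Longrightarrow> l u < l v
      \<Longrightarrow> length u < length v" using f' unfolding is_fork_def by blast
  have l0: "l [] = 0" using f' unfolding is_fork_def by blast
  have r0: "[] \<in> V'" using f' unfolding is_fork_def by blast
  have hN: "honest_idx ?w (Suc N)" unfolding N_def by (simp add: honest_snoc)
  then have "card {v\<in>V'. l v = Suc N} = 1" using hon' by blast
  then obtain u where u: "{v\<in>V'. l v = Suc N} = {u}" by (rule card_1_singletonE)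
  have uV: "u \<in> V'" and lu: "l u = Suc N" using u by auto
  have uniq: "\<And>v. v \<in> V' \<Longrightarrow> l v = Suc N \<Longrightarrow> v = u" using u by auto
  have un: "u \<noteq> []" using lu l0 by auto
  define V where "V = {v\<in>V'. \<exists>h\<in>V'. prefix v h \<and> h \<noteq> u \<and> honest_vertex ?w l h}"
  have hl: "l h \<le> N \<and> length h < length u" if h: "h \<in> V'" "h \<noteq> u" "honest_vertex ?w l h" for h
  proof -
    have "l h \<noteq> Suc N" using uniq h by blast
    then have lh: "l h \<le> N" using lab' h(1) by fastforce
    show ?thesis
    proof (cases "h = []")
      case True then show ?thesis using lh un by simp
    next
      case False
      then have "honest_idx ?w (l h)" using h(3) unfolding honest_vertex_def by simp
      then have "length h < length u" using f4' h(1) uV hN lu lh by simp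
      then show ?thesis using lh by simp
    qed
  qed
  have labV: "l v \<le> N \<and> length v < length u" if v: "v \<in> V" for v
  proof -
    obtain h where h: "h \<in> V'" "prefix v h" "h \<noteq> u" "honest_vertex ?w l h" using v unfolding V_def by blast
    have vV': "v \<in> V'" using v unfolding V_def by simp
    have "l v \<le> l h" using h(2) inc'[OF vV' h(1)] by (cases "v = h") (auto simp: prefix_order.less_le)
    moreover have "length v \<le> length h" using h(2) by (rule prefix_length_le)
    ultimately show ?thesis using hl[OF h(1,3,4)] by simp
  qed
  have r0V: "[] \<in> V" unfolding V_def
    by (intro CollectI conjI r0 bexI[of _ "[]"]) (auto simp: honest_vertex_def un[symmetric])
  have hvV: "h \<in> V" if "h \<in> V'" "h \<noteq> u" "honest_vertex ?w l h" for h
  proof -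
    have "prefix h h" by simp
    then show ?thesis unfolding V_def using that by blast
  qed
  have VV': "V \<subseteq> V'" unfolding V_def by blast
  have f: "is_fork w V l"
    unfolding is_fork_def
  proof (intro conjI ballI allI impI)
    have "V \<subseteq> V'" unfolding V_def by blast
    then show "finite V" using fork_basic(1)[OF f'] by (rule finite_subset)
    show "[] \<in> V" by (rule r0V)
  next
    fix v x assume a: "v \<in> V" "prefix x v"
    then obtain h where h: "h \<in> V'" "prefix v h" "h \<noteq> u" "honest_vertex ?w l h" unfolding V_def by blast
    have "x \<in> V'" using pc' a(2) h(1,2) prefix_order.order_trans by blast
    moreover have "prefix x h" using a(2) h(2) by (rule prefix_order.order_trans)
    ultimately show "x \<in> V" unfolding V_def using h by blast
  next
    fix v assume "v \<in> V" then show "l v \<le> length w" using labV N_def by simp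
  next
    show "l [] = 0" by (rule l0)
  next
    fix x v assume "x \<in> V" "v \<in> V" "strict_prefix x v"
    then show "l x < l v" using inc' unfolding V_def by blast
  next
    fix i assume hi: "honest_idx w i"
    then have hi': "honest_idx ?w i" by (simp add: honest_snoc)
    then obtain x where x: "{v\<in>V'. l v = i} = {x}" using hon' card_1_singletonE by blast
    have "i \<noteq> Suc N" using hi unfolding honest_idx_def N_def by simp
    moreover have xV': "x \<in> V'" "l x = i" using x by auto
    ultimately have "x \<noteq> u" using lu by auto
    moreover have "honest_vertex ?w l x" unfolding honest_vertex_def using hi' xV' by simp
    ultimately have "x \<in> V" using hvV xV' by blast
    then have "{v\<in>V. l v = i} = {x}" using x VV' by auto
    then show "card {v\<in>V. l v = i} = 1" by simp
  next
    fix x v assume "x \<in> V" "v \<in> V" "honest_idx w (l x) \<and> honest_idx w (l v) \<and> l x < l v"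
    then show "length x < length v" using f4' unfolding V_def by (auto simp: honest_snoc)
  qed
  have closed: "closed_fork w V l"
    unfolding closed_fork_def
  proof (intro conjI allI impI f)
    fix v assume lv: "is_leaf V v"
    then have vV: "v \<in> V" unfolding is_leaf_def by simp
    then obtain h where h: "h \<in> V'" "prefix v h" "h \<noteq> u" "honest_vertex ?w l h" unfolding V_def by blast
    have "h \<in> V" using hvV h by blast
    then have "v = h" using lv h(2) unfolding is_leaf_def by (auto simp: prefix_order.less_le)
    then show "honest_vertex w l v" using h(4) labV[OF vV] unfolding honest_vertex_def N_def
      by (auto simp: honest_snoc)
  qed
  obtain d where d: "d \<in> V" "length d = fork_height V" using height_attained[OF f] by blast
  have HH: "fork_height V < length u" using labV[OF d(1)] d(2) by simp
  have Hu: "length u \<le> fork_height V'" using height_ge[OF f' uV] .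
  let ?M = "max (rho_fork w V l - 1) 0"
  have bound: "reach ?w V' l v \<le> ?M" if "v \<in> V'" for v
    using that
  proof (induction "length v" arbitrary: v rule: less_induct)
    case less
    show ?case
    proof (cases "v \<in> V")
      case True
      have "reserve ?w l v = reserve w l v" by (rule reserve_snoc_F)
      moreover have "int (gap V' v) \<ge> int (gap V v) + 1"
        unfolding gap_def using HH Hu height_ge[OF f True] by simp
      ultimately have "reach ?w V' l v \<le> reach w V l v - 1" unfolding reach_def by simp
      also have "\<dots> \<le> rho_fork w V l - 1" using rho_fork_ge_reach[OF f True] by simp
      finally show ?thesis by simp
    next
      case False
      show ?thesis
      proof (cases "v = u")
        case True
        have "{i. 1 \<le> i \<and> i \<le> length ?w \<and> ?w ! (i - 1) \<and> i > l v} = {}"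
          using True lu N_def by auto
        then have "reserve ?w l v = 0" unfolding reserve_def by simp
        then have "reach ?w V' l v \<le> 0" unfolding reach_def by simp
        then show ?thesis by simp
      next
        case vu: False
        have nh: "\<not> honest_vertex ?w l v" using False vu hvV less.prems by blast
        have vn: "v \<noteq> []" using False r0V by blast
        have "reach ?w V' l v \<le> reach ?w V' l (butlast v)"
          by (rule reach_parent[OF f' less.prems vn nh])
        also have "\<dots> \<le> ?M"
          using less.hyps[of "butlast v"] vn pc'[OF less.prems prefixeq_butlast] by simp
        finally show ?thesis .
      qed
    qed
  qed
  have "rho_fork ?w V' l \<le> ?M" unfolding rho_fork_def[of ?w V' l]
    using fork_basic[OF f'] bound by simp
  then show ?thesis using closed by blast
qed



lemma closed_Nil: "closed_fork [] {[]} (\<lambda>_. 0)"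
  unfolding closed_fork_def is_fork_def honest_vertex_def honest_idx_def is_leaf_def
  by (auto simp: prefix_Nil)

lemma rho_wk: "(\<exists>V l. closed_fork w V l) \<and> rho w = int (wk 0 w)"
proof (induction w rule: rev_induct)
  case Nil
  obtain V l where "closed_fork [] V l" "rho_fork [] V l = rho []"
    using rho_facts(2)[OF closed_Nil] by blast
  then have "rho [] = 0" using rho_fork_bounds[of "[]" V l] unfolding closed_fork_def by simp
  then show ?case using closed_Nil by auto
next
  case (snoc x w)
  then obtain V0 l0 where c0: "closed_fork w V0 l0" by blast
  obtain V l where c: "closed_fork w V l" and r: "rho_fork w V l = rho w"
    using rho_facts(2)[OF c0] by blast
  show ?case
  proof (cases x)
    case True
    have c1: "closed_fork (w @ [True]) V l" using closed_T_to[OF c] .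
    have "rho w + 1 \<le> rho (w @ [True])"
      using rho_facts(1)[OF c1 c1] rho_fork_T[of w V l] c r unfolding closed_fork_def by simp
    moreover
    obtain V' l' where c': "closed_fork (w @ [True]) V' l'" and r': "rho_fork (w @ [True]) V' l' = rho (w @ [True])"
      using rho_facts(2)[OF c1] by blast
    have c'': "closed_fork w V' l'" using fork_T_from[OF c'] .
    have "rho (w @ [True]) \<le> rho w + 1"
      using rho_facts(1)[OF c0 c''] rho_fork_T[of w V' l'] c'' r' unfolding closed_fork_def by simp
    ultimately show ?thesis using True snoc c1 by (auto simp: wk_snoc)
  next
    case False
    obtain V1 l1 where c1: "closed_fork (w @ [False]) V1 l1"
      and le1: "max (rho_fork w V l - 1) 0 \<le> rho_fork (w @ [False]) V1 l1"
      using F_lower[OF c] by blast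
    have lo: "max (rho w - 1) 0 \<le> rho (w @ [False])"
      using le1 rho_facts(1)[OF c1 c1] r by simp
    obtain V' l' where c': "closed_fork (w @ [False]) V' l'" and r': "rho_fork (w @ [False]) V' l' = rho (w @ [False])"
      using rho_facts(2)[OF c1] by blast
    obtain V2 where c2: "closed_fork w V2 l'" and le2: "rho_fork (w @ [False]) V' l' \<le> max (rho_fork w V2 l' - 1) 0"
      using F_upper[OF c'] by blast
    have up: "rho (w @ [False]) \<le> max (rho w - 1) 0"
      using le2 r' rho_facts(1)[OF c0 c2] by simp
    have "rho w = int (wk 0 w)" using snoc by simp
    then have "rho (w @ [False]) = int (wk 0 (w @ [False]))" using lo up by (simp add: wk_snoc of_nat_diff max_def split: if_splits)
    then show ?thesis using False c1 by auto
  qed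
qed



lemma finite_len: "finite {w::bool list. length w = n \<and> P w}"
  by (rule finite_subset[OF _ finite_lists_length_eq[of "UNIV::bool set" n]]) auto

lemma split_sum:
  "sum f {w. length w = Suc n \<and> P w} =
     sum (\<lambda>w. f (True # w)) {w. length w = n \<and> P (True # w)}
   + sum (\<lambda>w. f (False # w)) {w. length w = n \<and> P (False # w)}"
proof -
  let ?A1 = "{w. length w = n \<and> P (True # w)}" and ?A0 = "{w. length w = n \<and> P (False # w)}"
  have e: "{w. length w = Suc n \<and> P w} = Cons True ` ?A1 \<union> Cons False ` ?A0"
  proof (rule set_eqI)
    fix w show "w \<in> {w. length w = Suc n \<and> P w} \<longleftrightarrow> w \<in> Cons True ` ?A1 \<union> Cons False ` ?A0"
    proof (cases w)
      case (Cons a list) then show ?thesis by (cases a) auto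
    qed auto
  qed
  have "sum f (Cons True ` ?A1 \<union> Cons False ` ?A0) = sum f (Cons True ` ?A1) + sum f (Cons False ` ?A0)"
    by (rule sum.union_disjoint) (auto intro: finite_len)
  also have "\<dots> = sum (\<lambda>w. f (True # w)) ?A1 + sum (\<lambda>w. f (False # w)) ?A0"
    by (simp add: sum.reindex)
  finally show ?thesis using e by simp
qed

lemma split_sum_all:
  "sum f {w. length w = Suc n} = sum (\<lambda>w. f (True # w)) {w. length w = n} + sum (\<lambda>w. f (False # w)) {w. length w = n}"
  using split_sum[of f n "\<lambda>_. True"] by simp

lemma B_rec:
  assumes q: "0 \<le> q" "q \<le> 1"
  shows "measure_pmf.prob (bernoulli_list (Suc n) q) A =
     q * measure_pmf.prob (bernoulli_list n q) {w. True # w \<in> A}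
   + (1 - q) * measure_pmf.prob (bernoulli_list n q) {w. False # w \<in> A}"
proof -
  have "emeasure (measure_pmf (bernoulli_list (Suc n) q)) A =
     emeasure (measure_pmf (bernoulli_list n q)) {w. True # w \<in> A} * ennreal q
   + emeasure (measure_pmf (bernoulli_list n q)) {w. False # w \<in> A} * ennreal (1 - q)"
    using q by (simp add: vimage_def)
  then show ?thesis using q
    by (simp add: measure_pmf.emeasure_eq_measure ennreal_mult'[symmetric] ennreal_plus[symmetric] mult.commute del: ennreal_plus)
qed

lemma B_snoc:
  assumes q: "0 \<le> q" "q \<le> 1"
  shows "measure_pmf.prob (bernoulli_list (Suc n) q) A =
     q * measure_pmf.prob (bernoulli_list n q) {w. w @ [True] \<in> A}
   + (1 - q) * measure_pmf.prob (bernoulli_list n q) {w. w @ [False] \<in> A}"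
proof (induction n arbitrary: A)
  case 0
  show ?case using B_rec[OF q, of 0 A] by (simp add: indicator_def)
next
  case (Suc n)
  have "measure_pmf.prob (bernoulli_list (Suc (Suc n)) q) A =
     q * measure_pmf.prob (bernoulli_list (Suc n) q) {w. True # w \<in> A}
   + (1 - q) * measure_pmf.prob (bernoulli_list (Suc n) q) {w. False # w \<in> A}"
    by (rule B_rec[OF q])
  also have "\<dots> = q * (q * measure_pmf.prob (bernoulli_list n q) {w. True # w @ [True] \<in> A}
        + (1 - q) * measure_pmf.prob (bernoulli_list n q) {w. True # w @ [False] \<in> A})
     + (1 - q) * (q * measure_pmf.prob (bernoulli_list n q) {w. False # w @ [True] \<in> A}
        + (1 - q) * measure_pmf.prob (bernoulli_list n q) {w. False # w @ [False] \<in> A})"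
    using Suc.IH[of "{w. True # w \<in> A}"] Suc.IH[of "{w. False # w \<in> A}"] by (simp del: bernoulli_list.simps)
  also have "\<dots> = q * measure_pmf.prob (bernoulli_list (Suc n) q) {w. w @ [True] \<in> A}
   + (1 - q) * measure_pmf.prob (bernoulli_list (Suc n) q) {w. w @ [False] \<in> A}"
  proof -
    have e1: "measure_pmf.prob (bernoulli_list (Suc n) q) {w. w @ [True] \<in> A} =
       q * measure_pmf.prob (bernoulli_list n q) {w. True # w @ [True] \<in> A}
     + (1 - q) * measure_pmf.prob (bernoulli_list n q) {w. False # w @ [True] \<in> A}"
      using B_rec[OF q, of n "{w. w @ [True] \<in> A}"] by (simp del: bernoulli_list.simps)
    have e2: "measure_pmf.prob (bernoulli_list (Suc n) q) {w. w @ [False] \<in> A} =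
       q * measure_pmf.prob (bernoulli_list n q) {w. True # w @ [False] \<in> A}
     + (1 - q) * measure_pmf.prob (bernoulli_list n q) {w. False # w @ [False] \<in> A}"
      using B_rec[OF q, of n "{w. w @ [False] \<in> A}"] by (simp del: bernoulli_list.simps)
    show ?thesis unfolding e1 e2 by (simp add: algebra_simps)
  qed
  finally show ?case .
qed

definition g :: "real \<Rightarrow> real \<Rightarrow> nat \<Rightarrow> nat \<Rightarrow> real" where
  "g q \<Lambda> n s = measure_pmf.prob (bernoulli_list n q) {w. \<Lambda> \<le> real (wk s w)}"

lemma g_rec: "0 \<le> q \<Longrightarrow> q \<le> 1 \<Longrightarrow> g q \<Lambda> (Suc n) s = q * g q \<Lambda> n (Suc s) + (1 - q) * g q \<Lambda> n (s - 1)"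
  unfolding g_def by (subst B_rec) auto

lemma g_mono: "s \<le> s' \<Longrightarrow> g q \<Lambda> n s \<le> g q \<Lambda> n s'"
  unfolding g_def
  by (rule measure_pmf.finite_measure_mono) (auto intro: order_trans[OF _ of_nat_mono[OF wk_mono]])

lemma g_nonneg: "0 \<le> g q \<Lambda> n s" unfolding g_def by simp

definition MC :: "real \<Rightarrow> nat \<Rightarrow> (bool list \<Rightarrow> real) \<Rightarrow> bool" where
  "MC q n \<mu> \<longleftrightarrow> (\<forall>t<n. \<forall>p. length p = t \<longrightarrow>
     sum \<mu> {w. length w = n \<and> take t w = p \<and> w ! t} \<le> q * sum \<mu> {w. length w = n \<and> take t w = p})"

lemma main_weight:
  assumes q: "0 \<le> q" "q \<le> 1"
  shows "(\<forall>w. 0 \<le> \<mu> w) \<Longrightarrow> MC q n \<mu> \<Longrightarrow>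
    sum \<mu> {w. length w = n \<and> \<Lambda> \<le> real (wk s w)} \<le> g q \<Lambda> n s * sum \<mu> {w. length w = n}"
proof (induction n arbitrary: s \<mu>)
  case 0
  have e: "{w::bool list. length w = 0} = {[]}" by auto
  show ?case
  proof (cases "\<Lambda> \<le> real s")
    case True
    then have z: "{w. length w = 0 \<and> \<Lambda> \<le> real (wk s w)} = {[]}" by auto
    show ?thesis using True unfolding g_def e z by simp
  next
    case False
    then have z: "{w. length w = 0 \<and> \<Lambda> \<le> real (wk s w)} = {}" by auto
    show ?thesis using False \<open>\<forall>w. 0 \<le> \<mu> w\<close> unfolding g_def e z by simp
  qed
next
  case (Suc n)
  define \<mu>1 where "\<mu>1 = (\<lambda>w. \<mu> (True # w))"
  define \<mu>0 where "\<mu>0 = (\<lambda>w. \<mu> (False # w))"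
  have nn1: "\<forall>w. 0 \<le> \<mu>1 w" and nn0: "\<forall>w. 0 \<le> \<mu>0 w" using Suc.prems(1) unfolding \<mu>1_def \<mu>0_def by auto
  have mc: "MC q n (\<lambda>w. \<mu> (b # w))" for b
    unfolding MC_def
  proof (intro allI impI)
    fix t and p :: "bool list" assume t: "t < n" and p: "length p = t"
    have "sum \<mu> {w. length w = Suc n \<and> take (Suc t) w = b # p \<and> w ! Suc t}
       \<le> q * sum \<mu> {w. length w = Suc n \<and> take (Suc t) w = b # p}"
      using Suc.prems(2) t p unfolding MC_def by auto
    then show "sum (\<lambda>w. \<mu> (b # w)) {w. length w = n \<and> take t w = p \<and> w ! t}
       \<le> q * sum (\<lambda>w. \<mu> (b # w)) {w. length w = n \<and> take t w = p}"
      by (cases b) (simp_all add: split_sum)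
  qed
  have "sum \<mu> {w. length w = Suc n \<and> take 0 w = [] \<and> w ! 0} \<le> q * sum \<mu> {w. length w = Suc n \<and> take 0 w = []}"
    using Suc.prems(2) unfolding MC_def by auto
  then have M: "sum \<mu>1 {w. length w = n} \<le> q * (sum \<mu>1 {w. length w = n} + sum \<mu>0 {w. length w = n})"
    unfolding \<mu>1_def \<mu>0_def by (simp add: split_sum split_sum_all)
  let ?M1 = "sum \<mu>1 {w. length w = n}" and ?M0 = "sum \<mu>0 {w. length w = n}"
  let ?g1 = "g q \<Lambda> n (Suc s)" and ?g0 = "g q \<Lambda> n (s - 1)"
  have "sum \<mu> {w. length w = Suc n \<and> \<Lambda> \<le> real (wk s w)} =
     sum \<mu>1 {w. length w = n \<and> \<Lambda> \<le> real (wk (Suc s) w)} + sum \<mu>0 {w. length w = n \<and> \<Lambda> \<le> real (wk (s - 1) w)}"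
    unfolding \<mu>1_def \<mu>0_def by (simp add: split_sum split_sum_all)
  also have "\<dots> \<le> ?g1 * ?M1 + ?g0 * ?M0"
    using Suc.IH[OF nn1, of "Suc s"] Suc.IH[OF nn0, of "s - 1"] mc unfolding \<mu>1_def \<mu>0_def
    by (intro add_mono) auto
  also have "\<dots> \<le> (q * ?g1 + (1 - q) * ?g0) * (?M1 + ?M0)"
  proof -
    have d: "0 \<le> ?g1 - ?g0" using g_mono[of "s - 1" "Suc s"] by simp
    have "(?g1 - ?g0) * ?M1 \<le> (?g1 - ?g0) * (q * (?M1 + ?M0))" using mult_left_mono[OF M d] .
    then show ?thesis by (simp add: algebra_simps)
  qed
  also have "\<dots> = g q \<Lambda> (Suc n) s * sum \<mu> {w. length w = Suc n}"
    using g_rec[OF q] unfolding \<mu>1_def \<mu>0_def by (simp add: split_sum split_sum_all)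
  finally show ?case .
qed



lemma prob_sum:
  fixes W :: "bool list pmf"
  assumes "\<forall>w\<in>set_pmf W. length w = n"
  shows "measure_pmf.prob W {w. P w} = sum (pmf W) {w. length w = n \<and> P w}"
proof -
  have e: "{w. P w} \<inter> set_pmf W = {w. length w = n \<and> P w} \<inter> set_pmf W" using assms by auto
  have "measure_pmf.prob W {w. P w} = measure_pmf.prob W ({w. P w} \<inter> set_pmf W)"
    by (simp add: measure_Int_set_pmf)
  also have "\<dots> = measure_pmf.prob W {w. length w = n \<and> P w}"
    unfolding e by (simp add: measure_Int_set_pmf)
  also have "\<dots> = sum (pmf W) {w. length w = n \<and> P w}"
    by (rule measure_measure_pmf_finite[OF finite_len])
  finally show ?thesis .
qed

lemma partA:
  assumes q: "0 \<le> q" "q \<le> 1" and len: "\<forall>w\<in>set_pmf W. length w = n"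
    and mart: "\<forall>t < n. \<forall>p. length p = t \<longrightarrow>
        measure_pmf.prob W {w. take t w = p \<and> w ! t} \<le> q * measure_pmf.prob W {w. take t w = p}"
  shows "measure_pmf.prob W {w. \<Lambda> \<le> real (wk 0 w)} \<le> measure_pmf.prob (bernoulli_list n q) {w. \<Lambda> \<le> real (wk 0 w)}"
proof -
  have mc: "MC q n (pmf W)" unfolding MC_def
    using mart prob_sum[OF len, of "\<lambda>w. take _ w = _ \<and> w ! _"] prob_sum[OF len, of "\<lambda>w. take _ w = _"]
    by simp
  have one: "sum (pmf W) {w. length w = n} = 1"
    using prob_sum[OF len, of "\<lambda>_. True"] by simp
  have "measure_pmf.prob W {w. \<Lambda> \<le> real (wk 0 w)} = sum (pmf W) {w. length w = n \<and> \<Lambda> \<le> real (wk 0 w)}"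
    by (rule prob_sum[OF len])
  also have "\<dots> \<le> g q \<Lambda> n 0 * sum (pmf W) {w. length w = n}"
    by (rule main_weight[OF q]) (use mc in auto)
  finally show ?thesis unfolding one g_def by simp
qed

lemma partB:
  assumes q: "0 \<le> q" "q < 1"
  shows "measure_pmf.prob (bernoulli_list n q) {w. m \<le> wk 0 w} \<le> (q / (1 - q)) ^ m"
proof (induction n arbitrary: m)
  case 0
  show ?case using q by (cases m) auto
next
  case (Suc n)
  let ?r = "q / (1 - q)"
  have r0: "0 \<le> ?r" using q by simp
  show ?case
  proof (cases m)
    case 0
    then show ?thesis by simp
  next
    case (Suc k)
    have "measure_pmf.prob (bernoulli_list (Suc n) q) {w. m \<le> wk 0 w} =
       q * measure_pmf.prob (bernoulli_list n q) {w. k \<le> wk 0 w}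
     + (1 - q) * measure_pmf.prob (bernoulli_list n q) {w. Suc (Suc k) \<le> wk 0 w}"
    proof -
      have "{w. Suc k \<le> wk 0 w - Suc 0} = {w. Suc (Suc k) \<le> wk 0 w}" by auto
      then show ?thesis
        using B_snoc[of q n "{w. m \<le> wk 0 w}"] q Suc by (simp add: wk_snoc del: bernoulli_list.simps)
    qed
    also have "\<dots> \<le> q * ?r ^ k + (1 - q) * ?r ^ Suc (Suc k)"
      using Suc.IH[of k] Suc.IH[of "Suc (Suc k)"] q
      by (intro add_mono mult_left_mono) auto
    also have "\<dots> = ?r ^ m"
    proof -
      have c1: "(1 - q) * ?r = q" using q by (simp add: field_simps)
      have c2: "q * (1 + ?r) = ?r" using q by (simp add: field_simps)
      have a: "(1 - q) * ?r ^ Suc (Suc k) = q * ?r ^ Suc k"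
      proof -
        have "(1 - q) * ?r ^ Suc (Suc k) = ((1 - q) * ?r) * ?r ^ Suc k" by (simp only: power_Suc mult.assoc)
        then show ?thesis using c1 by simp
      qed
      have b: "q * ?r ^ k + q * ?r ^ Suc k = ?r ^ Suc k"
      proof -
        have "q * ?r ^ k + q * ?r ^ Suc k = (q * (1 + ?r)) * ?r ^ k" by (simp add: algebra_simps)
        then show ?thesis using c2 by simp
      qed
      show ?thesis using a b Suc by simp
    qed
    finally show ?thesis .
  qed
qed

lemma R_tail:
  assumes r: "0 \<le> r" "r < 1" and R: "\<forall>k. pmf R k = (1 - r) * r ^ k"
  shows "measure_pmf.prob R {k. m \<le> k} = r ^ m"
proof -
  have s: "sum (pmf R) {..<m} = 1 - r ^ m"
    by (induction m) (simp_all add: R algebra_simps)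
  have "{k. m \<le> k} = space (measure_pmf R) - {..<m}" by auto
  then have "measure_pmf.prob R {k. m \<le> k} = 1 - measure_pmf.prob R {..<m}"
    using measure_pmf.prob_compl[of "{..<m}" R] by simp
  also have "\<dots> = r ^ m" using s measure_measure_pmf_finite[of "{..<m}" R] by simp
  finally show ?thesis .
qed

lemma ceil_iff: "\<Lambda> \<le> real k \<longleftrightarrow> nat \<lceil>\<Lambda>\<rceil> \<le> k"
  by (simp add: nat_le_iff ceiling_le_iff)



theorem lemma4:
  fixes \<epsilon> :: real and n :: nat and W :: "bool list pmf" and R :: "nat pmf"
  assumes "0 < \<epsilon>" and "\<epsilon> < 1"
    and "\<forall>w \<in> set_pmf W. length w = n"
    and "eps_martingale \<epsilon> n W"
    and "\<forall>k. pmf R k = 2 * \<epsilon> / (1 + \<epsilon>) * ((1 - \<epsilon>) / (1 + \<epsilon>)) ^ k"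
  shows "\<forall>\<Lambda>::real.
           measure_pmf.prob W {w. \<Lambda> \<le> of_int (rho w)}
             \<le> measure_pmf.prob (bernoulli_list n ((1 - \<epsilon>) / 2)) {w. \<Lambda> \<le> of_int (rho w)}
         \<and> measure_pmf.prob (bernoulli_list n ((1 - \<epsilon>) / 2)) {w. \<Lambda> \<le> of_int (rho w)}
             \<le> measure_pmf.prob R {k. \<Lambda> \<le> of_nat k}"
proof (intro allI conjI)
  fix \<Lambda> :: real
  define q where "q = (1 - \<epsilon>) / 2"
  have q: "0 \<le> q" "q \<le> 1" "q < 1" using assms(1,2) by (auto simp: q_def)
  have set1: "{w. \<Lambda> \<le> of_int (rho w)} = {w. \<Lambda> \<le> real (wk 0 w)}" using rho_wk by simp
  have mart: "\<forall>t < n. \<forall>p. length p = t \<longrightarrow>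
        measure_pmf.prob W {w. take t w = p \<and> w ! t} \<le> q * measure_pmf.prob W {w. take t w = p}"
    using assms(4) unfolding eps_martingale_def q_def .
  have "measure_pmf.prob W {w. \<Lambda> \<le> real (wk 0 w)} \<le> measure_pmf.prob (bernoulli_list n q) {w. \<Lambda> \<le> real (wk 0 w)}"
    by (rule partA[OF q(1,2) assms(3) mart])
  then show "measure_pmf.prob W {w. \<Lambda> \<le> of_int (rho w)}
             \<le> measure_pmf.prob (bernoulli_list n ((1 - \<epsilon>) / 2)) {w. \<Lambda> \<le> of_int (rho w)}"
    unfolding set1 q_def .
  define m where "m = nat \<lceil>\<Lambda>\<rceil>"
  define r where "r = (1 - \<epsilon>) / (1 + \<epsilon>)"
  have rq: "q / (1 - q) = r" unfolding q_def r_def using assms(1,2) by (simp add: field_simps)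
  have r: "0 \<le> r" "r < 1" unfolding r_def using assms(1,2) by (auto simp: field_simps)
  have Rr: "\<forall>k. pmf R k = (1 - r) * r ^ k"
  proof
    fix k
    have "2 * \<epsilon> / (1 + \<epsilon>) = 1 - r" unfolding r_def using assms(1) by (simp add: field_simps)
    then show "pmf R k = (1 - r) * r ^ k" using assms(5) unfolding r_def by simp
  qed
  have set2: "{w. \<Lambda> \<le> real (wk 0 w)} = {w. m \<le> wk 0 w}" unfolding m_def using ceil_iff by blast
  have set3: "{k. \<Lambda> \<le> of_nat k} = {k. m \<le> k}" unfolding m_def using ceil_iff by blast
  have "measure_pmf.prob (bernoulli_list n q) {w. m \<le> wk 0 w} \<le> r ^ m"
    using partB[OF q(1,3), of n m] rq by simp
  also have "\<dots> = measure_pmf.prob R {k. m \<le> k}" using R_tail[OF r Rr] by simp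
  finally show "measure_pmf.prob (bernoulli_list n ((1 - \<epsilon>) / 2)) {w. \<Lambda> \<le> of_int (rho w)}
             \<le> measure_pmf.prob R {k. \<Lambda> \<le> of_nat k}"
    unfolding set1 set2 set3 q_def .
qed


end
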